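(* Let $\sigma$ be a finite relational signature, let $\varphi=\forall x_1\exists y_1\cdots\forall x_k\exists y_k\,P(x_1,y_1,\dots,x_k,y_k)$ be a positive Horn sentence with $P$ a conjunction of atomic $\sigma$-formulas containing no equalities, and let $\psi$ be a positive Horn sentence over $\sigma$. Then $\varphi\rightarrow\psi$ is logically valid (true in every $\sigma$-structure) if and only if $\mathcal{T}_\varphi(C_\omega)\models\psi$.
   Context: Positive Horn sentences are first-order sentences built from atoms using only $\exists,\forall,\wedge$. Let $f_1,\dots,f_k$ be new function symbols, $f_i$ of arity $i$, and $\mathrm{Sk}(\varphi)=\forall x_1\cdots\forall x_k\,P(x_1,f_1(x_1),\dots,x_k,f_k(x_1,\dots,x_k))$. Let $C_\omega=\{c_1,c_2,\dots\}$ be countably many new constants and $T_\varphi(C_\omega)$ the set of closed terms built from $C_\omega$ with $f_1,\dots,f_k$. The canonical model $\mathcal{T}_\varphi(C_\omega)$ is the $\sigma$-structure with domain $T_\varphi(C_\omega)$ in which $R(t_1,\dots,t_p)$ holds iff it is obtained from an atom of the matrix of $\mathrm{Sk}(\varphi)$ by substituting terms of $T_\varphi(C_\omega)$ for $x_1,\dots,x_k$. *)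

theory Defs
  imports Main
begin

datatype 'r fm =
    Atom 'r "nat list"
  | Eq nat nat
  | Conj "'r fm" "'r fm"
  | Ex nat "'r fm"
  | All nat "'r fm"

fun wf_fm :: "('r \<Rightarrow> nat) \<Rightarrow> 'r fm \<Rightarrow> bool" where
  "wf_fm ar (Atom R vs) = (length vs = ar R)"
| "wf_fm ar (Eq i j) = True"
| "wf_fm ar (Conj a b) = (wf_fm ar a \<and> wf_fm ar b)"
| "wf_fm ar (Ex x a) = wf_fm ar a"
| "wf_fm ar (All x a) = wf_fm ar a"

fun fv :: "'r fm \<Rightarrow> nat set" where
  "fv (Atom R vs) = set vs"
| "fv (Eq i j) = {i, j}"
| "fv (Conj a b) = fv a \<union> fv b"
| "fv (Ex x a) = fv a - {x}"
| "fv (All x a) = fv a - {x}"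

definition sentence :: "'r fm \<Rightarrow> bool" where
  "sentence a \<longleftrightarrow> fv a = {}"

definition is_struct :: "('r \<Rightarrow> nat) \<Rightarrow> 'a set \<Rightarrow> ('r \<Rightarrow> 'a list \<Rightarrow> bool) \<Rightarrow> bool" where
  "is_struct ar D I \<longleftrightarrow> D \<noteq> {} \<and>
     (\<forall>R xs. I R xs \<longrightarrow> length xs = ar R \<and> set xs \<subseteq> D)"

fun sat :: "'a set \<Rightarrow> ('r \<Rightarrow> 'a list \<Rightarrow> bool) \<Rightarrow> (nat \<Rightarrow> 'a) \<Rightarrow> 'r fm \<Rightarrow> bool" where
  "sat D I e (Atom R vs) = I R (map e vs)"
| "sat D I e (Eq i j) = (e i = e j)"
| "sat D I e (Conj a b) = (sat D I e a \<and> sat D I e b)"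
| "sat D I e (Ex x a) = (\<exists>d\<in>D. sat D I (e(x := d)) a)"
| "sat D I e (All x a) = (\<forall>d\<in>D. sat D I (e(x := d)) a)"

definition models :: "'a set \<Rightarrow> ('r \<Rightarrow> 'a list \<Rightarrow> bool) \<Rightarrow> 'r fm \<Rightarrow> bool" where
  "models D I a \<longleftrightarrow> (\<forall>e. (\<forall>v. e v \<in> D) \<longrightarrow> sat D I e a)"

text \<open>Logical validity of the implication a --> b, over all structures whose
  domain is a subset of the type 'a.  (The main theorem quantifies over all
  infinite types 'a, which covers structures of every cardinality.)\<close>

definition valid_imp :: "'a itself \<Rightarrow> ('r \<Rightarrow> nat) \<Rightarrow> 'r fm \<Rightarrow> 'r fm \<Rightarrow> bool" where
  "valid_imp _ ar a b \<longleftrightarrow>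
     (\<forall>(D::'a set) I. is_struct ar D I \<longrightarrow> models D I a \<longrightarrow> models D I b)"

text \<open>Convention: x_i is the variable 2*i and y_i is the variable 2*i+1
  (for 1 <= i <= k).  The matrix P is a nonempty list of relational atoms
  (R, vs), i.e. a conjunction of atoms without equalities.\<close>

fun conjs :: "'r fm list \<Rightarrow> 'r fm" where
  "conjs [] = undefined"
| "conjs [a] = a"
| "conjs (a # b # as) = Conj a (conjs (b # as))"

fun prefix :: "nat \<Rightarrow> nat \<Rightarrow> 'r fm \<Rightarrow> 'r fm" where
  "prefix i 0 a = a"
| "prefix i (Suc n) a = All (2*i) (Ex (2*i+1) (prefix (Suc i) n a))"

definition phi_fm :: "nat \<Rightarrow> ('r \<times> nat list) list \<Rightarrow> 'r fm" where
  "phi_fm k P = prefix 1 k (conjs (map (\<lambda>(R, vs). Atom R vs) P))"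

text \<open>Closed terms built from constants c_n (n :: nat) and Skolem function
  symbols f_i (1 <= i <= k) of arity i.\<close>

datatype trm = Cst nat | Fn nat "trm list"

inductive_set closed_terms :: "nat \<Rightarrow> trm set" for k :: nat where
  cst: "Cst n \<in> closed_terms k"
| fn: "\<lbrakk>1 \<le> i; i \<le> k; length ts = i; \<forall>s\<in>set ts. s \<in> closed_terms k\<rbrakk>
        \<Longrightarrow> Fn i ts \<in> closed_terms k"

text \<open>Value of a variable of the matrix of Sk(phi) under the substitution
  x_j := t j: x_i evaluates to t i, y_i to f_i(t 1, ..., t i).\<close>

definition sk_val :: "(nat \<Rightarrow> trm) \<Rightarrow> nat \<Rightarrow> trm" where
  "sk_val t v = (if even v then t (v div 2)
                 else Fn (v div 2) (map t [1..<v div 2 + 1]))"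

definition canon_rel :: "nat \<Rightarrow> ('r \<times> nat list) list \<Rightarrow> 'r \<Rightarrow> trm list \<Rightarrow> bool" where
  "canon_rel k P R ts \<longleftrightarrow>
     (\<exists>vs t. (R, vs) \<in> set P \<and> (\<forall>j\<in>{1..k}. t j \<in> closed_terms k) \<and>
            ts = map (sk_val t) vs)"

end

theory Submission
  imports Defs "HOL-Library.Countable"
begin

instance trm :: countable by countable_datatype

definition mat :: "('r \<times> nat list) list \<Rightarrow> 'r fm" where
  "mat P = conjs (map (\<lambda>(R, vs). Atom R vs) P)"

lemma sat_conjs: "as \<noteq> [] \<Longrightarrow> sat D I e (conjs as) \<longleftrightarrow> (\<forall>a\<in>set as. sat D I e a)"
  by (induction as rule: conjs.induct) auto

lemma sat_mat: "P \<noteq> [] \<Longrightarrow> sat D I e (mat P) \<longleftrightarrow> (\<forall>(R,vs)\<in>set P. I R (map e vs))"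
  unfolding mat_def by (subst sat_conjs) auto

lemma sat_cong: "(\<forall>v\<in>fv a. e v = e' v) \<Longrightarrow> sat D I e a = sat D I e' a"
proof (induction a arbitrary: e e')
  case (Atom R vs) then show ?case by (simp cong: map_cong)
next
  case (Ex x a)
  have "\<And>d. sat D I (e(x:=d)) a = sat D I (e'(x:=d)) a" using Ex by (intro Ex.IH) auto
  then show ?case by simp
next
  case (All x a)
  have "\<And>d. sat D I (e(x:=d)) a = sat D I (e'(x:=d)) a" using All by (intro All.IH) auto
  then show ?case by simp
next
  case (Conj a1 a2)
  have "sat D I e a1 = sat D I e' a1" "sat D I e a2 = sat D I e' a2"
    using Conj by (intro Conj.IH; auto)+
  then show ?case by simp
qed auto

lemma finite_fv: "finite (fv a)"
  by (induction a) auto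

definition envxy :: "(nat \<Rightarrow> 'a) \<Rightarrow> 'a list \<Rightarrow> 'a list \<Rightarrow> nat \<Rightarrow> 'a" where
  "envxy e0 xs ys v = (if 2 \<le> v \<and> even v \<and> v div 2 \<le> length xs then xs ! (v div 2 - 1)
     else if 2 \<le> v \<and> odd v \<and> v div 2 \<le> length ys then ys ! (v div 2 - 1) else e0 v)"

lemma envxy_nil: "envxy e0 [] [] = e0"
  by (auto simp: envxy_def fun_eq_iff)

lemma envxy_snoc:
  assumes "length ys = length xs"
  shows "envxy e0 (xs@[x]) (ys@[d]) = (envxy e0 xs ys)(2*(length xs+1) := x, 2*(length xs+1)+1 := d)"
proof
  fix v
  show "envxy e0 (xs@[x]) (ys@[d]) v = ((envxy e0 xs ys)(2*(length xs+1) := x, 2*(length xs+1)+1 := d)) v"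
  proof (cases "even v")
    case True
    then obtain q where q: "v = 2*q" by (auto elim: evenE)
    show ?thesis using assms unfolding q
      by (cases "q \<le> length xs"; cases "q = length xs + 1") (auto simp: envxy_def nth_append)
  next
    case False
    then obtain q where q: "v = 2*q+1" by (auto elim: oddE)
    show ?thesis using assms unfolding q
      by (cases "q \<le> length xs"; cases "q = length xs + 1") (auto simp: envxy_def nth_append)
  qed
qed

context
  fixes D :: "'a set" and I :: "'r \<Rightarrow> 'a list \<Rightarrow> bool" and e0 :: "nat \<Rightarrow> 'a"
    and k :: nat and a :: "'r fm"
begin

fun Yf :: "'a list \<Rightarrow> 'a" where
  "Yf xs = (SOME d. d \<in> D \<and> sat D I (envxy e0 xs (map (\<lambda>j. Yf (take j xs)) [1..<length xs] @ [d]))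
              (prefix (length xs + 1) (k - length xs) a))"

declare Yf.simps[simp del]

definition ysOf :: "'a list \<Rightarrow> 'a list" where
  "ysOf xs = map (\<lambda>j. Yf (take j xs)) [1..<length xs + 1]"

lemma length_ysOf[simp]: "length (ysOf xs) = length xs"
  by (auto simp: ysOf_def Suc_le_eq)

lemma map_take_snoc: "map (\<lambda>j. Yf (take j (xs@[x]))) [1..<length xs + 1] = ysOf xs"
  unfolding ysOf_def by (rule map_cong) auto

lemma map_take_snoc': "map (\<lambda>j. Yf (take j (xs@[x]))) [1..<length (xs@[x])] = ysOf xs"
  using map_take_snoc by simp

lemma ysOf_snoc: "ysOf (xs@[x]) = ysOf xs @ [Yf (xs@[x])]"
proof -
  have "ysOf (xs@[x]) = map (\<lambda>j. Yf (take j (xs@[x]))) ([1..<length xs + 1] @ [length xs + 1])"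
    unfolding ysOf_def by simp
  also have "\<dots> = ysOf xs @ [Yf (xs@[x])]" by (simp only: map_append map_take_snoc) simp
  finally show ?thesis .
qed

lemma Yf_snoc: "Yf (xs@[x]) = (SOME d. d \<in> D \<and> sat D I (envxy e0 (xs@[x]) (ysOf xs @ [d]))
              (prefix (length xs + 2) (k - length xs - 1) a))"
  apply (subst Yf.simps)
  apply (simp only: map_take_snoc')
  apply simp
  done

lemma ysOf_inv:
  assumes base: "sat D I e0 (prefix 1 k a)"
  shows "set xs \<subseteq> D \<Longrightarrow> length xs \<le> k \<Longrightarrow>
    sat D I (envxy e0 xs (ysOf xs)) (prefix (length xs + 1) (k - length xs) a) \<and> set (ysOf xs) \<subseteq> D"
proof (induction xs rule: rev_induct)
  case Nil
  then show ?case using base by (simp add: envxy_nil ysOf_def)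
next
  case (snoc x xs)
  let ?m = "length xs"
  have IH: "sat D I (envxy e0 xs (ysOf xs)) (prefix (?m + 1) (k - ?m) a)" "set (ysOf xs) \<subseteq> D"
    using snoc by auto
  have km: "k - ?m = Suc (k - ?m - 1)" using snoc.prems by simp
  have "\<exists>d\<in>D. sat D I ((envxy e0 xs (ysOf xs))(2*(?m+1) := x, 2*(?m+1)+1 := d))
          (prefix (?m + 2) (k - ?m - 1) a)"
    using IH(1) snoc.prems km by (subst (asm) km) simp
  then have ex: "\<exists>d. d \<in> D \<and> sat D I (envxy e0 (xs@[x]) (ysOf xs @ [d]))
          (prefix (?m + 2) (k - ?m - 1) a)"
    by (auto simp: envxy_snoc)
  have "Yf (xs@[x]) \<in> D \<and> sat D I (envxy e0 (xs@[x]) (ysOf xs @ [Yf (xs@[x])]))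
          (prefix (?m + 2) (k - ?m - 1) a)"
    unfolding Yf_snoc by (rule someI_ex[OF ex])
  then show ?case using IH(2) by (simp add: ysOf_snoc)
qed

lemma ysOf_nth: "i < length xs \<Longrightarrow> ysOf xs ! i = Yf (take (Suc i) xs)"
  unfolding ysOf_def by (simp del: upt_Suc)

lemma Yf_in_ysOf: "xs \<noteq> [] \<Longrightarrow> Yf xs \<in> set (ysOf xs)"
proof -
  assume "xs \<noteq> []"
  then have "ysOf xs ! (length xs - 1) = Yf xs" by (simp add: ysOf_nth)
  moreover have "length xs - 1 < length (ysOf xs)" using \<open>xs \<noteq> []\<close> by simp
  ultimately show ?thesis by (metis nth_mem)
qed

end

fun hh :: "('a list \<Rightarrow> 'a) \<Rightarrow> (nat \<Rightarrow> 'a) \<Rightarrow> trm \<Rightarrow> 'a" where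
  "hh Y g (Cst n) = g n"
| "hh Y g (Fn i ts) = Y (map (hh Y g) ts)"

fun cnsts :: "trm \<Rightarrow> nat set" where
  "cnsts (Cst n) = {n}"
| "cnsts (Fn i ts) = \<Union> (cnsts ` set ts)"

lemma finite_cnsts: "finite (cnsts t)"
  by (induction t) auto

lemma hh_cong: "(\<forall>n\<in>cnsts t. g n = g' n) \<Longrightarrow> hh Y g t = hh Y g' t"
  by (induction t) (auto cong: map_cong)

context
  fixes D :: "'a set" and I :: "'r \<Rightarrow> 'a list \<Rightarrow> bool" and e0 :: "nat \<Rightarrow> 'a"
    and k :: nat and P :: "('r \<times> nat list) list"
  assumes base: "sat D I e0 (prefix 1 k (mat P))"
    and Pne: "P \<noteq> []"
    and Pwf: "\<forall>(R, vs) \<in> set P. set vs \<subseteq> {2..2*k+1}"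
begin

abbreviation "YY \<equiv> Yf D I e0 k (mat P)"

lemma hh_in: "t \<in> closed_terms k \<Longrightarrow> \<forall>n. g n \<in> D \<Longrightarrow> hh YY g t \<in> D"
proof (induction t rule: closed_terms.induct)
  case (cst n) then show ?case by simp
next
  case (fn i ts)
  let ?xs = "map (hh YY g) ts"
  have "set ?xs \<subseteq> D" "length ?xs \<le> k" "?xs \<noteq> []" using fn by auto
  then have "set (ysOf D I e0 k (mat P) ?xs) \<subseteq> D" using ysOf_inv[OF base] by blast
  then show ?case using Yf_in_ysOf[OF \<open>?xs \<noteq> []\<close>, of D I e0 k "mat P"] by auto
qed

lemma hom:
  "\<forall>v. e v \<in> closed_terms k \<Longrightarrow> \<forall>n. g n \<in> D \<Longrightarrow> sat (closed_terms k) (canon_rel k P) e \<theta>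
   \<Longrightarrow> sat D I (hh YY g \<circ> e) \<theta>"
proof (induction \<theta> arbitrary: e g)
  case (Atom R vs)
  from Atom.prems(3) obtain vs' t where Rvs: "(R, vs') \<in> set P"
    and tT: "\<forall>j\<in>{1..k}. t j \<in> closed_terms k" and eq: "map e vs = map (sk_val t) vs'"
    by (auto simp: canon_rel_def)
  define xs where "xs = map (hh YY g \<circ> t) [1..<k+1]"
  have lxs: "length xs = k" by (simp add: xs_def)
  have "set xs \<subseteq> D" using hh_in[OF _ Atom.prems(2)] tT by (auto simp: xs_def)
  from ysOf_inv[OF base this] lxs
  have "sat D I (envxy e0 xs (ysOf D I e0 k (mat P) xs)) (prefix (k+1) 0 (mat P))" by simp
  then have "sat D I (envxy e0 xs (ysOf D I e0 k (mat P) xs)) (mat P)" by (simp only: prefix.simps)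
  then have "\<forall>(R,vs)\<in>set P. I R (map (envxy e0 xs (ysOf D I e0 k (mat P) xs)) vs)"
    using sat_mat[OF Pne] by blast
  then have Ival: "I R (map (envxy e0 xs (ysOf D I e0 k (mat P) xs)) vs')"
    using Rvs by blast
  have vs'sub: "set vs' \<subseteq> {2..2*k+1}" using Pwf Rvs by auto
  have "map (hh YY g \<circ> sk_val t) vs' = map (envxy e0 xs (ysOf D I e0 k (mat P) xs)) vs'"
  proof (rule map_cong[OF refl])
    fix v assume "v \<in> set vs'"
    then have v: "2 \<le> v" "v \<le> 2*k+1" using vs'sub by auto
    show "(hh YY g \<circ> sk_val t) v = envxy e0 xs (ysOf D I e0 k (mat P) xs) v"
    proof (cases "even v")
      case True
      then obtain q where q: "v = 2*q" by (auto elim: evenE)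
      have q1: "1 \<le> q" "q \<le> k" using v q by auto
      have "xs ! (q - 1) = hh YY g (t q)" using q1 by (simp add: xs_def nth_map del: upt_Suc)
      then show ?thesis using q q1 lxs by (simp add: envxy_def sk_val_def)
    next
      case False
      then obtain q where q: "v = 2*q+1" by (auto elim: oddE)
      have q1: "1 \<le> q" "q \<le> k" using v q by auto
      have tk: "take q xs = map (hh YY g) (map t [1..<q+1])"
        using q1 by (simp add: xs_def take_map take_upt del: upt_Suc)
      have "ysOf D I e0 k (mat P) xs ! (q - 1) = YY (take q xs)"
        using q1 lxs by (simp add: ysOf_nth)
      then show ?thesis using q q1 lxs tk by (simp add: envxy_def sk_val_def)
    qed
  qed
  then have "map (hh YY g \<circ> e) vs = map (envxy e0 xs (ysOf D I e0 k (mat P) xs)) vs'"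
    using eq by (metis map_map)
  then show ?case using Ival by (simp only: sat.simps)
next
  case (Eq i j) then show ?case by simp
next
  case (Conj a1 a2) then show ?case by simp
next
  case (Ex x \<theta>)
  from Ex.prems(3) obtain t where t: "t \<in> closed_terms k" "sat (closed_terms k) (canon_rel k P) (e(x:=t)) \<theta>"
    by auto
  have "\<forall>v. (e(x:=t)) v \<in> closed_terms k" using Ex.prems(1) t by auto
  from Ex.IH[OF this Ex.prems(2) t(2)]
  have 1: "sat D I (hh YY g \<circ> e(x := t)) \<theta>" .
  have "hh YY g \<circ> e(x := t) = (hh YY g \<circ> e)(x := hh YY g t)" by (rule ext) simp
  with 1 have "sat D I ((hh YY g \<circ> e)(x := hh YY g t)) \<theta>" by simp
  moreover have "hh YY g t \<in> D" using hh_in[OF t(1) Ex.prems(2)] .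
  ultimately show ?case unfolding sat.simps by blast
next
  case (All x \<theta>)
  show ?case unfolding sat.simps
  proof
    fix d assume d: "d \<in> D"
    have "finite (\<Union> (cnsts ` e ` fv \<theta>))" using finite_fv finite_cnsts by blast
    then obtain c where c: "c \<notin> \<Union> (cnsts ` e ` fv \<theta>)" using ex_new_if_finite[OF infinite_UNIV_nat] by blast
    define g' where "g' = g(c := d)"
    have g': "\<forall>n. g' n \<in> D" using All.prems(2) d by (simp add: g'_def)
    have e': "\<forall>v. (e(x := Cst c)) v \<in> closed_terms k" using All.prems(1) by (auto intro: closed_terms.cst)
    have "sat (closed_terms k) (canon_rel k P) (e(x := Cst c)) \<theta>"
      using All.prems(3) by (auto intro: closed_terms.cst)
    from All.IH[OF e' g' this] have 1: "sat D I (hh YY g' \<circ> e(x := Cst c)) \<theta>" .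
    have "\<forall>v\<in>fv \<theta>. (hh YY g' \<circ> e(x := Cst c)) v = ((hh YY g \<circ> e)(x := d)) v"
    proof
      fix v assume v: "v \<in> fv \<theta>"
      show "(hh YY g' \<circ> e(x := Cst c)) v = ((hh YY g \<circ> e)(x := d)) v"
      proof (cases "v = x")
        case True then show ?thesis by (simp add: g'_def)
      next
        case False
        have "c \<notin> cnsts (e v)" using c v by auto
        then have "hh YY g' (e v) = hh YY g (e v)" by (intro hh_cong) (auto simp: g'_def)
        then show ?thesis using False by simp
      qed
    qed
    then show "sat D I ((hh YY g \<circ> e)(x := d)) \<theta>" using 1 sat_cong by blast
  qed
qed

end

lemma canon_prefix:
  assumes Pne: "P \<noteq> []" and Pwf: "\<forall>(R, vs) \<in> set P. set vs \<subseteq> {2..2*k+1}"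
  shows "i + n = k + 1 \<Longrightarrow> 1 \<le> i \<Longrightarrow> \<forall>v. e v \<in> closed_terms k \<Longrightarrow>
    (\<forall>j. 1 \<le> j \<and> j < i \<longrightarrow> e (2*j+1) = Fn j (map (\<lambda>l. e (2*l)) [1..<j+1])) \<Longrightarrow>
    sat (closed_terms k) (canon_rel k P) e (prefix i n (mat P))"
proof (induction n arbitrary: i e)
  case 0
  have "\<forall>(R,vs)\<in>set P. canon_rel k P R (map e vs)"
  proof (intro ballI, clarify)
    fix R vs assume Rvs: "(R, vs) \<in> set P"
    define t where "t = (\<lambda>j. e (2*j))"
    have "map e vs = map (sk_val t) vs"
    proof (rule map_cong[OF refl])
      fix v assume "v \<in> set vs"
      moreover have "set vs \<subseteq> {2..2*k+1}" using bspec[OF Pwf Rvs] by simp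
      ultimately have v: "2 \<le> v" "v \<le> 2*k+1" by auto
      show "e v = sk_val t v"
      proof (cases "even v")
        case True then show ?thesis by (simp add: sk_val_def t_def)
      next
        case False
        then obtain q where q: "v = 2*q+1" by (auto elim: oddE)
        have "1 \<le> q" "q < i" using v q 0 by auto
        then show ?thesis using 0(4) q by (simp add: sk_val_def t_def)
      qed
    qed
    moreover have "\<forall>j\<in>{1..k}. t j \<in> closed_terms k" using 0(3) by (simp add: t_def)
    ultimately show "canon_rel k P R (map e vs)" using Rvs unfolding canon_rel_def by blast
  qed
  then show ?case by (simp only: prefix.simps sat_mat[OF Pne])
next
  case (Suc n)
  have ik: "i \<le> k" using Suc.prems by simp
  show ?case unfolding prefix.simps sat.simps
  proof
    fix d assume d: "d \<in> closed_terms k"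
    define e' where "e' = e(2*i := d)"
    define y where "y = Fn i (map (\<lambda>l. e' (2*l)) [1..<i+1])"
    have e'T: "\<forall>v. e' v \<in> closed_terms k" using Suc.prems(3) d by (simp add: e'_def)
    have yT: "y \<in> closed_terms k" unfolding y_def
      using Suc.prems(2) ik e'T by (intro closed_terms.fn) auto
    define e'' where "e'' = e'(2*i+1 := y)"
    have e''T: "\<forall>v. e'' v \<in> closed_terms k" using e'T yT by (simp add: e''_def)
    have cond: "\<forall>j. 1 \<le> j \<and> j < Suc i \<longrightarrow> e'' (2*j+1) = Fn j (map (\<lambda>l. e'' (2*l)) [1..<j+1])"
    proof (intro allI impI)
      fix j assume j: "1 \<le> j \<and> j < Suc i"
      have ne: "\<And>l. 2*l \<noteq> Suc (2*i)" by presburger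
      have m: "map (\<lambda>l. e'' (2*l)) [1..<j+1] = map (\<lambda>l. e' (2*l)) [1..<j+1]"
        by (rule map_cong[OF refl]) (auto simp: e''_def ne)
      show "e'' (2*j+1) = Fn j (map (\<lambda>l. e'' (2*l)) [1..<j+1])"
      proof (cases "j = i")
        case True then show ?thesis using m by (simp add: e''_def y_def)
      next
        case False
        then have ji: "j < i" using j by simp
        have m2: "map (\<lambda>l. e' (2*l)) [1..<j+1] = map (\<lambda>l. e (2*l)) [1..<j+1]"
          by (rule map_cong[OF refl]) (use ji in \<open>auto simp: e'_def\<close>)
        have "e'' (2*j+1) = e (2*j+1)" using ji by (simp add: e''_def e'_def)
        then show ?thesis using m m2 Suc.prems(4) j ji by simp
      qed
    qed
    have "sat (closed_terms k) (canon_rel k P) e'' (prefix (Suc i) n (mat P))"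
      using Suc.IH[of "Suc i" e''] Suc.prems(1) e''T cond by simp
    then show "\<exists>y\<in>closed_terms k. sat (closed_terms k) (canon_rel k P) (e(2*i := d, 2*i+1 := y))
        (prefix (Suc i) n (mat P))"
      using yT unfolding e''_def e'_def by blast
  qed
qed

lemma sat_iso:
  assumes "inj j"
  shows "\<forall>v. e v \<in> T \<Longrightarrow> sat (j ` T) (\<lambda>R xs. \<exists>ts. C R ts \<and> xs = map j ts) (j \<circ> e) \<theta> = sat T C e \<theta>"
proof (induction \<theta> arbitrary: e)
  case (Atom R vs)
  have "\<And>ts. map (j \<circ> e) vs = map j ts \<longleftrightarrow> map e vs = ts"
    by (metis inj_map_eq_map[OF assms] map_map)
  then have "(\<exists>ts. C R ts \<and> map (j \<circ> e) vs = map j ts) = C R (map e vs)" by auto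
  then show ?case by (simp only: sat.simps)
next
  case (Eq a b) then show ?case using assms by (simp add: inj_eq)
next
  case (Conj a b) then show ?case by simp
next
  case (Ex x \<theta>)
  have "\<And>t. t \<in> T \<Longrightarrow> sat (j ` T) (\<lambda>R xs. \<exists>ts. C R ts \<and> xs = map j ts) ((j \<circ> e)(x := j t)) \<theta> = sat T C (e(x := t)) \<theta>"
  proof -
    fix t assume t: "t \<in> T"
    have eq: "(j \<circ> e)(x := j t) = j \<circ> e(x := t)" by (rule ext) simp
    have "\<forall>v. (e(x:=t)) v \<in> T" using Ex.prems t by simp
    from Ex.IH[OF this] show "?thesis t" by (simp only: eq)
  qed
  then show ?case unfolding sat.simps by blast
next
  case (All x \<theta>)
  have "\<And>t. t \<in> T \<Longrightarrow> sat (j ` T) (\<lambda>R xs. \<exists>ts. C R ts \<and> xs = map j ts) ((j \<circ> e)(x := j t)) \<theta> = sat T C (e(x := t)) \<theta>"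
  proof -
    fix t assume t: "t \<in> T"
    have eq: "(j \<circ> e)(x := j t) = j \<circ> e(x := t)" by (rule ext) simp
    have "\<forall>v. (e(x:=t)) v \<in> T" using All.prems t by simp
    from All.IH[OF this] show "?thesis t" by (simp only: eq)
  qed
  then show ?case unfolding sat.simps by blast
qed

lemma sk_val_in:
  assumes "\<forall>j\<in>{1..k}. t j \<in> closed_terms k" "2 \<le> v" "v \<le> 2*k+1"
  shows "sk_val t v \<in> closed_terms k"
proof (cases "even v")
  case True then show ?thesis using assms by (auto simp: sk_val_def elim!: evenE)
next
  case False
  then obtain q where q: "v = 2*q+1" by (auto elim: oddE)
  then have "1 \<le> q" "q \<le> k" using assms by auto
  then show ?thesis using assms q by (auto simp: sk_val_def intro!: closed_terms.fn)
qed

theorem mainTheorem10: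
  fixes ar :: "'r::finite \<Rightarrow> nat"
    and k :: nat
    and P :: "('r \<times> nat list) list"
    and \<psi> :: "'r fm"
  assumes "P \<noteq> []"
    and "\<forall>(R, vs) \<in> set P. length vs = ar R \<and> set vs \<subseteq> {2..2*k+1}"
    and "wf_fm ar \<psi>"
    and "sentence \<psi>"
    and "infinite (UNIV :: 'a set)"
  shows "valid_imp TYPE('a) ar (phi_fm k P) \<psi> \<longleftrightarrow>
         models (closed_terms k) (canon_rel k P) \<psi>"
proof
  have Pwf: "\<forall>(R, vs) \<in> set P. set vs \<subseteq> {2..2*k+1}" using assms(2) by auto
  have phi: "phi_fm k P = prefix 1 k (mat P)" by (simp add: phi_fm_def mat_def)
  let ?T = "closed_terms k"
  have canon_phi: "models ?T (canon_rel k P) (phi_fm k P)"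
    unfolding models_def phi using canon_prefix[OF assms(1) Pwf] by auto
  have fvpsi: "fv \<psi> = {}" using assms(4) by (simp add: sentence_def)
  {
    assume V: "valid_imp TYPE('a) ar (phi_fm k P) \<psi>"
    obtain f :: "nat \<Rightarrow> 'a" where f: "inj f" using infinite_countable_subset[OF assms(5)] by blast
    define j :: "trm \<Rightarrow> 'a" where "j = f \<circ> to_nat"
    have j: "inj j" unfolding j_def using f by (simp add: inj_compose)
    define I' where "I' = (\<lambda>R xs. \<exists>ts. canon_rel k P R ts \<and> xs = map j ts)"
    have str: "is_struct ar (j ` ?T) I'"
      unfolding is_struct_def
    proof (intro conjI allI impI)
      show "j ` ?T \<noteq> {}" using closed_terms.cst by blast
    next
      fix R xs assume "I' R xs"
      then obtain ts vs t where Rvs: "(R, vs) \<in> set P" and tT: "\<forall>j\<in>{1..k}. t j \<in> ?T"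
        and ts: "ts = map (sk_val t) vs" and xs: "xs = map j ts"
        unfolding I'_def canon_rel_def by blast
      show "length xs = ar R" using assms(2) Rvs ts xs by auto
      have "set ts \<subseteq> ?T" using ts sk_val_in[OF tT] Pwf Rvs by fastforce
      then show "set xs \<subseteq> j ` ?T" using xs by auto
    qed
    have "models (j ` ?T) I' (phi_fm k P)"
      unfolding models_def
    proof (intro allI impI)
      fix e' :: "nat \<Rightarrow> 'a" assume e': "\<forall>v. e' v \<in> j ` ?T"
      define e where "e = inv_into ?T j \<circ> e'"
      have eT: "\<forall>v. e v \<in> ?T" using e' by (simp add: e_def inv_into_into)
      have ee: "j \<circ> e = e'" using e' by (auto simp: e_def f_inv_into_f)
      have "sat ?T (canon_rel k P) e (phi_fm k P)" using canon_phi eT unfolding models_def by blast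
      then show "sat (j ` ?T) I' e' (phi_fm k P)"
        using sat_iso[OF j eT, of "canon_rel k P"] unfolding I'_def ee by simp
    qed
    then have M: "models (j ` ?T) I' \<psi>" using V str unfolding valid_imp_def by blast
    show "models ?T (canon_rel k P) \<psi>"
      unfolding models_def
    proof (intro allI impI)
      fix e :: "nat \<Rightarrow> trm" assume eT: "\<forall>v. e v \<in> ?T"
      have "\<forall>v. (j \<circ> e) v \<in> j ` ?T" using eT by simp
      then have "sat (j ` ?T) I' (j \<circ> e) \<psi>" using M unfolding models_def by blast
      then show "sat ?T (canon_rel k P) e \<psi>" using sat_iso[OF j eT, of "canon_rel k P" \<psi>] unfolding I'_def by blast
    qed
  }
  {
    assume C: "models ?T (canon_rel k P) \<psi>"
    show "valid_imp TYPE('a) ar (phi_fm k P) \<psi>"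
      unfolding valid_imp_def
    proof (intro allI impI)
      fix D :: "'a set" and I
      assume str: "is_struct ar D I" and MD: "models D I (phi_fm k P)"
      obtain d0 where d0: "d0 \<in> D" using str unfolding is_struct_def by blast
      define e0 where "e0 = (\<lambda>_::nat. d0)"
      have base: "sat D I e0 (prefix 1 k (mat P))" using MD d0 unfolding models_def phi e0_def by simp
      have cT: "\<forall>v. (\<lambda>_::nat. Cst 0) v \<in> ?T" by (simp add: closed_terms.cst)
      have "sat ?T (canon_rel k P) (\<lambda>_. Cst 0) \<psi>" using C unfolding models_def by (simp add: closed_terms.cst)
      from hom[OF base assms(1) Pwf cT _ this, of "\<lambda>_. d0"] d0
      have H: "sat D I (hh (Yf D I e0 k (mat P)) (\<lambda>_. d0) \<circ> (\<lambda>_. Cst 0)) \<psi>" by simp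
      show "models D I \<psi>"
        unfolding models_def
      proof (intro allI impI)
        fix e :: "nat \<Rightarrow> 'a" assume "\<forall>v. e v \<in> D"
        show "sat D I e \<psi>" using H sat_cong[of \<psi>] fvpsi by blast
      qed
    qed
  }
qed

end
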